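(* Let $W$ be an $\epsilon$-spectral cluster of $G_0$, let $V\subseteq V_0$ be closed in $G_0$ and dominate $W$, let $G=G_0|V$, and let $S\subseteq V$ be such that $S$ and $\overline S=V\setminus S$ are both closed in $G$ and $\overline S$ dominates $W$. Perform the big expansion of $S$ inside $G$ (a grab, then local improvements of $S$, then a grab, then local improvements of $S$), followed by local improvements of $\overline S$ (while there exists $v\in S$ with $d_G(v)>0$ and at least $\frac59 d_G(v)$ of its $G$-neighbors in $V\setminus S$, move $v$ from $S$ to $\overline S$). Then the final set $\overline S$ dominates $W$.
   Context: Standing setting: $G_0=(V_0,E_0)$ is a finite simple undirected graph and $0<\epsilon\le 1/2000000$. For a graph $H$, $d_H(v)$ is the degree, $\mathrm{vol}_H(S)=\sum_{v\in S}d_H(v)$, $E(S,T)$ is the set of edges with one endpoint in $S$ and the other in $T$, $\partial_H S=E(S,V(H)\setminus S)$. For $V\subseteq V_0$, $G_0|V$ is the induced subgraph. An $\epsilon$-spectral cluster of $G_0$ is $W\subseteq V_0$ with $\mathrm{vol}_{G_0}(W)>0$, $|\partial_{G_0}W|\le\epsilon\,\mathrm{vol}_{G_0}(W)$, and for every $A\subseteq W$ with $r=\mathrm{vol}_{G_0}(A)/\mathrm{vol}_{G_0}(W)$, $|E(A,W\setminus A)|\ge(r(1-r)-\epsilon)\mathrm{vol}_{G_0}(W)$. A set $A\subseteq V(H)$ is closed in $H$ if no $v\in V(H)\setminus A$ with $d_H(v)>0$ has at least $\frac59 d_H(v)$ of its $H$-neighbors in $A$. A set $A\subseteq V_0$ dominates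 $W$ if $\mathrm{vol}_{G_0}(W\cap A)>(1-3\epsilon)\mathrm{vol}_{G_0}(W)$. A grab of $S$ in $G$ replaces $S$ by $S\cup T$, where $T$ is the set of all $v\in V\setminus S$ with $d_G(v)>0$ having at least $\frac16 d_G(v)$ of their $G$-neighbors in $S$ (computed before the grab). Local improvements of $S$ in $G$: while there exists $v\in V\setminus S$ with $d_G(v)>0$ and at least $\frac59 d_G(v)$ of its $G$-neighbors in $S$, add $v$ to $S$. *)

theory Defs
  imports Complex_Main
begin

text \<open>A finite simple undirected graph is given by a finite vertex set V0 and a
symmetric irreflexive edge relation E on V0 (ordered pairs, both orientations present).
For V a subset of V0, the induced subgraph G0|V has vertex set V and edges E restricted to V.\<close>

definition simple_graph :: "'a set \<Rightarrow> ('a \<times> 'a) set \<Rightarrow> bool" where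
  "simple_graph V0 E \<longleftrightarrow> finite V0 \<and> E \<subseteq> V0 \<times> V0 \<and> sym E \<and> irrefl E"

definition nbrs :: "('a \<times> 'a) set \<Rightarrow> 'a set \<Rightarrow> 'a \<Rightarrow> 'a set" where
  "nbrs E V v = {u \<in> V. (v, u) \<in> E}"

definition deg :: "('a \<times> 'a) set \<Rightarrow> 'a set \<Rightarrow> 'a \<Rightarrow> nat" where
  "deg E V v = card (nbrs E V v)"

definition vol :: "('a \<times> 'a) set \<Rightarrow> 'a set \<Rightarrow> 'a set \<Rightarrow> nat" where
  "vol E V S = (\<Sum>v\<in>S. deg E V v)"

definition edges_between :: "('a \<times> 'a) set \<Rightarrow> 'a set \<Rightarrow> 'a set \<Rightarrow> 'a set set" where
  "edges_between E S T = {{u, v} | u v. u \<in> S \<and> v \<in> T \<and> (u, v) \<in> E}"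

definition spectral_cluster :: "'a set \<Rightarrow> ('a \<times> 'a) set \<Rightarrow> real \<Rightarrow> 'a set \<Rightarrow> bool" where
  "spectral_cluster V0 E eps W \<longleftrightarrow>
     W \<subseteq> V0 \<and> vol E V0 W > 0 \<and>
     real (card (edges_between E W (V0 - W))) \<le> eps * real (vol E V0 W) \<and>
     (\<forall>A \<subseteq> W. let r = real (vol E V0 A) / real (vol E V0 W) in
        real (card (edges_between E A (W - A))) \<ge> (r * (1 - r) - eps) * real (vol E V0 W))"

definition closed_in_graph :: "('a \<times> 'a) set \<Rightarrow> 'a set \<Rightarrow> 'a set \<Rightarrow> bool" where
  "closed_in_graph E V A \<longleftrightarrow>
     (\<forall>v \<in> V - A. deg E V v > 0 \<longrightarrow>
        \<not> (real (card (nbrs E V v \<inter> A)) \<ge> 5/9 * real (deg E V v)))"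

definition dominates :: "'a set \<Rightarrow> ('a \<times> 'a) set \<Rightarrow> real \<Rightarrow> 'a set \<Rightarrow> 'a set \<Rightarrow> bool" where
  "dominates V0 E eps A W \<longleftrightarrow>
     real (vol E V0 (W \<inter> A)) > (1 - 3 * eps) * real (vol E V0 W)"

definition grab :: "('a \<times> 'a) set \<Rightarrow> 'a set \<Rightarrow> 'a set \<Rightarrow> 'a set" where
  "grab E V S = S \<union> {v \<in> V - S. deg E V v > 0 \<and>
                          real (card (nbrs E V v \<inter> S)) \<ge> 1/6 * real (deg E V v)}"

definition li_step :: "('a \<times> 'a) set \<Rightarrow> 'a set \<Rightarrow> 'a set \<Rightarrow> 'a set \<Rightarrow> bool" where
  "li_step E V S S' \<longleftrightarrow>
     (\<exists>v \<in> V - S. deg E V v > 0 \<and>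
        real (card (nbrs E V v \<inter> S)) \<ge> 5/9 * real (deg E V v) \<and> S' = insert v S)"

text \<open>S' is a possible outcome of running local improvements of S in G0|V to completion
(any order of choices).\<close>
definition local_improvements :: "('a \<times> 'a) set \<Rightarrow> 'a set \<Rightarrow> 'a set \<Rightarrow> 'a set \<Rightarrow> bool" where
  "local_improvements E V S S' \<longleftrightarrow>
     (li_step E V)\<^sup>*\<^sup>* S S' \<and> \<not> (\<exists>S''. li_step E V S' S'')"

end

theory Submission
  imports Defs
begin

definition pc :: "('a \<times> 'a) set \<Rightarrow> 'a set \<Rightarrow> 'a set \<Rightarrow> nat" where
  "pc E A B = card (E \<inter> (A \<times> B))"

lemma pc_mono: "finite E \<Longrightarrow> A \<subseteq> A' \<Longrightarrow> B \<subseteq> B' \<Longrightarrow> pc E A B \<le> pc E A' B'"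
  unfolding pc_def by (rule card_mono) auto

lemma pc_Un1: assumes "finite E" "A \<inter> A' = {}"
  shows "pc E (A \<union> A') B = pc E A B + pc E A' B"
proof -
  have "E \<inter> ((A \<union> A') \<times> B) = (E \<inter> (A \<times> B)) \<union> (E \<inter> (A' \<times> B))" by auto
  moreover have "(E \<inter> (A \<times> B)) \<inter> (E \<inter> (A' \<times> B)) = {}" using assms(2) by auto
  ultimately show ?thesis unfolding pc_def using assms(1) by (simp add: card_Un_disjoint)
qed

lemma pc_Un2: assumes "finite E" "B \<inter> B' = {}"
  shows "pc E A (B \<union> B') = pc E A B + pc E A B'"
proof -
  have "E \<inter> (A \<times> (B \<union> B')) = (E \<inter> (A \<times> B)) \<union> (E \<inter> (A \<times> B'))" by auto
  moreover have "(E \<inter> (A \<times> B)) \<inter> (E \<inter> (A \<times> B')) = {}" using assms(2) by auto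
  ultimately show ?thesis unfolding pc_def using assms(1) by (simp add: card_Un_disjoint)
qed

lemma pc_Un_le1: assumes "finite E"
  shows "pc E (A \<union> A') B \<le> pc E A B + pc E A' B"
proof -
  have "E \<inter> ((A \<union> A') \<times> B) = (E \<inter> (A \<times> B)) \<union> (E \<inter> (A' \<times> B))" by auto
  then show ?thesis unfolding pc_def by (metis card_Un_le)
qed

lemma pc_Un_le2: assumes "finite E"
  shows "pc E A (B \<union> B') \<le> pc E A B + pc E A B'"
proof -
  have "E \<inter> (A \<times> (B \<union> B')) = (E \<inter> (A \<times> B)) \<union> (E \<inter> (A \<times> B'))" by auto
  then show ?thesis unfolding pc_def by (metis card_Un_le)
qed

lemma pc_sym: assumes "sym E" shows "pc E A B = pc E B A"
proof -
  have "E \<inter> (B \<times> A) = prod.swap ` (E \<inter> (A \<times> B))"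
  proof
    show "E \<inter> (B \<times> A) \<subseteq> prod.swap ` (E \<inter> (A \<times> B))"
    proof
      fix p assume p: "p \<in> E \<inter> (B \<times> A)"
      obtain b a where pba: "p = (b, a)" by (cases p)
      with p assms have "(a, b) \<in> E \<inter> (A \<times> B)" by (auto dest: symD)
      then have "prod.swap (a,b) \<in> prod.swap ` (E \<inter> (A \<times> B))" by (rule imageI)
      then show "p \<in> prod.swap ` (E \<inter> (A \<times> B))" using pba by simp
    qed
    show "prod.swap ` (E \<inter> (A \<times> B)) \<subseteq> E \<inter> (B \<times> A)" using assms by (auto dest: symD)
  qed
  then have "card (E \<inter> (B \<times> A)) = card (E \<inter> (A \<times> B))" by (simp add: card_image)
  then show ?thesis unfolding pc_def by simp
qed

lemma pc_empty[simp]: "pc E {} B = 0" by (simp add: pc_def)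

lemma pc_sum: assumes "finite E" "finite A" shows "pc E A B = (\<Sum>a\<in>A. pc E {a} B)"
  using assms(2)
proof (induction A rule: finite_induct)
  case empty then show ?case by simp
next
  case (insert x F)
  have d: "{x} \<inter> F = {}" using insert by auto
  have "pc E (insert x F) B = pc E ({x} \<union> F) B" by simp
  also have "\<dots> = pc E {x} B + pc E F B" using pc_Un1[OF assms(1) d] by simp
  finally show ?case using insert by simp
qed

lemma pc_single: "pc E {v} B = card {u\<in>B. (v,u)\<in>E}"
proof -
  have "E \<inter> ({v} \<times> B) = Pair v ` {u\<in>B. (v,u)\<in>E}" by auto
  then show ?thesis unfolding pc_def by (simp add: card_image inj_on_def)
qed

lemma deg_pc: "deg E V v = pc E {v} V" by (simp add: deg_def nbrs_def pc_single)

lemma nbrs_Int: "card (nbrs E V v \<inter> B) = pc E {v} (V \<inter> B)"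
proof -
  have "nbrs E V v \<inter> B = {u\<in>V \<inter> B. (v,u)\<in>E}" by (auto simp: nbrs_def)
  then show ?thesis by (simp add: pc_single)
qed

lemma vol_pc: "finite E \<Longrightarrow> finite A \<Longrightarrow> vol E V A = pc E A V"
  by (simp add: vol_def deg_pc pc_sum[of E A V])

lemma pc_diag: "irrefl E \<Longrightarrow> pc E {v} {v} = 0"
  by (simp add: pc_single irrefl_def)

lemma eb_card: assumes "A \<inter> B = {}" shows "card (edges_between E A B) = pc E A B"
proof -
  have eq: "edges_between E A B = (\<lambda>(u,v). {u,v}) ` (E \<inter> (A \<times> B))"
    unfolding edges_between_def by force
  have "inj_on (\<lambda>(u,v). {u,v}) (E \<inter> (A \<times> B))"
  proof (rule inj_onI)
    fix p q assume p: "p \<in> E \<inter> (A \<times> B)" and q: "q \<in> E \<inter> (A \<times> B)"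
      and e: "(\<lambda>(u,v). {u,v}) p = (\<lambda>(u,v). {u,v}) q"
    obtain a b where pab: "p = (a,b)" by (cases p)
    obtain c d where qcd: "q = (c,d)" by (cases q)
    from e pab qcd have ee: "{a,b} = {c,d}" by simp
    have "a \<in> A" "b \<in> B" "c \<in> A" "d \<in> B" using p q pab qcd by auto
    then have "a \<noteq> d" "b \<noteq> c" using assms by auto
    with ee have "a = c \<and> b = d" by (metis doubleton_eq_iff)
    then show "p = q" using pab qcd by simp
  qed
  then show ?thesis unfolding eq pc_def by (simp add: card_image)
qed


lemma grab_bound:
  assumes finE: "finite E" and symE: "sym E" and V0fin: "finite V0"
    and WV0: "W \<subseteq> V0" and VV0: "V \<subseteq> V0" and SV: "S \<subseteq> V"
  shows "pc E (W \<inter> grab E V S) V0 \<le> 7 * pc E (W \<inter> S) V0 + pc E (W - V) V0 + 7 * pc E W (V0 - W)"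
proof -
  define Y where "Y = W \<inter> S"
  define B where "B = W \<inter> (grab E V S - S)"
  have eq: "W \<inter> grab E V S = Y \<union> B" by (auto simp: grab_def Y_def B_def)
  have Bv: "pc E {v} V \<le> 6 * pc E {v} S" if "v \<in> B" for v
  proof -
    from that have "real (card (nbrs E V v \<inter> S)) \<ge> 1/6 * real (deg E V v)"
      by (auto simp: B_def grab_def)
    moreover have "card (nbrs E V v \<inter> S) = pc E {v} S"
      using nbrs_Int[of E V v S] SV by (simp add: Int_absorb1)
    ultimately show ?thesis by (simp add: deg_pc)
  qed
  have finB: "finite B" using V0fin WV0 unfolding B_def by (meson finite_subset inf.coboundedI1)
  have s1: "pc E B V \<le> 6 * pc E B S"
  proof -
    have "pc E B V = (\<Sum>v\<in>B. pc E {v} V)" using pc_sum[OF finE finB] .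
    also have "\<dots> \<le> (\<Sum>v\<in>B. 6 * pc E {v} S)" by (rule sum_mono) (rule Bv)
    also have "\<dots> = 6 * pc E B S" using pc_sum[OF finE finB, of S] by (simp add: sum_distrib_left)
    finally show ?thesis .
  qed
  have s2: "pc E B S \<le> pc E B Y + pc E B (V0 - W)"
  proof -
    have "S \<subseteq> Y \<union> (V0 - W)" using SV VV0 Y_def by auto
    then have "pc E B S \<le> pc E B (Y \<union> (V0 - W))" using pc_mono[OF finE] by blast
    also have "\<dots> \<le> pc E B Y + pc E B (V0 - W)" by (rule pc_Un_le2[OF finE])
    finally show ?thesis .
  qed
  have s3: "pc E B Y \<le> pc E Y V0"
  proof -
    have "pc E B Y = pc E Y B" by (rule pc_sym[OF symE])
    also have "\<dots> \<le> pc E Y V0" using WV0 by (intro pc_mono[OF finE]) (auto simp: B_def)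
    finally show ?thesis .
  qed
  have s4: "pc E B (V0 - W) \<le> pc E W (V0 - W)" by (intro pc_mono[OF finE]) (auto simp: B_def)
  have s5: "pc E B V0 \<le> pc E B V + pc E B (W - V) + pc E B (V0 - W)"
  proof -
    have "V0 \<subseteq> (V \<union> (W - V)) \<union> (V0 - W)" by auto
    then have "pc E B V0 \<le> pc E B ((V \<union> (W - V)) \<union> (V0 - W))" using pc_mono[OF finE] by blast
    also have "\<dots> \<le> pc E B (V \<union> (W - V)) + pc E B (V0 - W)" by (rule pc_Un_le2[OF finE])
    also have "pc E B (V \<union> (W - V)) \<le> pc E B V + pc E B (W - V)" by (rule pc_Un_le2[OF finE])
    finally show ?thesis by simp
  qed
  have s6: "pc E B (W - V) \<le> pc E (W - V) V0"
  proof -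
    have "pc E B (W - V) = pc E (W - V) B" by (rule pc_sym[OF symE])
    also have "\<dots> \<le> pc E (W - V) V0" using WV0 by (intro pc_mono[OF finE]) (auto simp: B_def)
    finally show ?thesis .
  qed
  have s7: "pc E (Y \<union> B) V0 \<le> pc E Y V0 + pc E B V0" by (rule pc_Un_le1[OF finE])
  have s8: "pc E (W \<inter> grab E V S) V0 = pc E (Y \<union> B) V0" using eq by simp
  show ?thesis using s8 s1 s2 s3 s4 s5 s6 s7 unfolding Y_def by linarith
qed

definition phi :: "('a \<times> 'a) set \<Rightarrow> 'a set \<Rightarrow> 'a set \<Rightarrow> 'a set \<Rightarrow> 'a set \<Rightarrow> int" where
  "phi E V0 W U S = 9 * int (pc E (W \<inter> S) (W \<inter> S)) - 10 * int (pc E (W \<inter> S) V0)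
     + 18 * int (pc E (W \<inter> S) U) + 36 * int (pc E (W \<inter> S) (V0 - W))"

lemma phi_step:
  assumes finE: "finite E" and symE: "sym E" and irrE: "irrefl E"
    and WV0: "W \<subseteq> V0" and VV0: "V \<subseteq> V0" and SV: "S \<subseteq> V"
    and st: "li_step E V S S'"
  shows "phi E V0 W (W - V) S \<le> phi E V0 W (W - V) S'"
proof -
  obtain v where vV: "v \<in> V - S" and vc: "real (card (nbrs E V v \<inter> S)) \<ge> 5/9 * real (deg E V v)"
    and S': "S' = insert v S" using st unfolding li_step_def by blast
  show ?thesis
  proof (cases "v \<in> W")
    case False
    then have "W \<inter> S' = W \<inter> S" using S' by auto
    then show ?thesis by (simp add: phi_def)
  next
    case True
    define Y where "Y = W \<inter> S"
    define U where "U = W - V"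
    have Y': "W \<inter> S' = {v} \<union> Y" using S' True Y_def by auto
    have dis: "{v} \<inter> Y = {}" using vV Y_def by auto
    have c: "5 * pc E {v} V \<le> 9 * pc E {v} S"
    proof -
      have "card (nbrs E V v \<inter> S) = pc E {v} S"
        using nbrs_Int[of E V v S] SV by (simp add: Int_absorb1)
      with vc show ?thesis by (simp add: deg_pc)
    qed
    have h1: "pc E {v} S \<le> pc E {v} Y + pc E {v} (V0 - W)"
    proof -
      have "S \<subseteq> Y \<union> (V0 - W)" using SV VV0 Y_def by auto
      then have "pc E {v} S \<le> pc E {v} (Y \<union> (V0 - W))" using pc_mono[OF finE] by blast
      also have "\<dots> \<le> pc E {v} Y + pc E {v} (V0 - W)" by (rule pc_Un_le2[OF finE])
      finally show ?thesis .
    qed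
    have h2: "pc E {v} V0 \<le> pc E {v} V + pc E {v} U + pc E {v} (V0 - W)"
    proof -
      have "V0 \<subseteq> (V \<union> U) \<union> (V0 - W)" using U_def by auto
      then have "pc E {v} V0 \<le> pc E {v} ((V \<union> U) \<union> (V0 - W))" using pc_mono[OF finE] by blast
      also have "\<dots> \<le> pc E {v} (V \<union> U) + pc E {v} (V0 - W)" by (rule pc_Un_le2[OF finE])
      also have "pc E {v} (V \<union> U) \<le> pc E {v} V + pc E {v} U" by (rule pc_Un_le2[OF finE])
      finally show ?thesis by simp
    qed
    have e1: "pc E ({v} \<union> Y) ({v} \<union> Y) = pc E Y Y + 2 * pc E {v} Y"
    proof -
      have "pc E ({v} \<union> Y) ({v} \<union> Y) = pc E {v} ({v} \<union> Y) + pc E Y ({v} \<union> Y)"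
        by (rule pc_Un1[OF finE dis])
      also have "pc E {v} ({v} \<union> Y) = pc E {v} {v} + pc E {v} Y" by (rule pc_Un2[OF finE dis])
      also have "pc E Y ({v} \<union> Y) = pc E Y {v} + pc E Y Y" by (rule pc_Un2[OF finE dis])
      also have "pc E Y {v} = pc E {v} Y" by (rule pc_sym[OF symE])
      finally show ?thesis using pc_diag[OF irrE, of v] by simp
    qed
    have e2: "pc E ({v} \<union> Y) B = pc E {v} B + pc E Y B" for B by (rule pc_Un1[OF finE dis])
    show ?thesis unfolding phi_def Y' using e1 e2[of V0] e2[of U] e2[of "V0 - W"] c h1 h2
      unfolding Y_def U_def by linarith
  qed
qed

lemma li_step_sub: "li_step E V S S' \<Longrightarrow> S \<subseteq> V \<Longrightarrow> S' \<subseteq> V \<and> S \<subseteq> S'"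
  unfolding li_step_def by auto

lemma li_rtrancl:
  assumes "(li_step E V)\<^sup>*\<^sup>* S T" and "S \<subseteq> V"
  shows "T \<subseteq> V \<and> S \<subseteq> T"
  using assms(1)
proof (induction rule: rtranclp_induct)
  case base then show ?case using assms(2) by simp
next
  case (step y z) then show ?case using li_step_sub[of E V y z] by blast
qed

lemma phi_rtrancl:
  assumes finE: "finite E" and symE: "sym E" and irrE: "irrefl E"
    and WV0: "W \<subseteq> V0" and VV0: "V \<subseteq> V0"
    and r: "(li_step E V)\<^sup>*\<^sup>* S T" and SV: "S \<subseteq> V"
  shows "phi E V0 W (W - V) S \<le> phi E V0 W (W - V) T"
  using r
proof (induction rule: rtranclp_induct)
  case base then show ?case by simp
next
  case (step y z)
  have "y \<subseteq> V" using li_rtrancl[OF step(1) SV] by blast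
  then show ?case using phi_step[OF finE symE irrE WV0 VV0 _ step(2)] step(3) by fastforce
qed

lemma li_bound:
  assumes finE: "finite E" and symE: "sym E" and irrE: "irrefl E"
    and WV0: "W \<subseteq> V0" and VV0: "V \<subseteq> V0"
    and r: "(li_step E V)\<^sup>*\<^sup>* S T" and SV: "S \<subseteq> V"
  shows "pc E (W \<inter> T) V0 \<le> 10 * pc E (W \<inter> S) V0 + 18 * pc E (W - V) V0 + 36 * pc E W (V0 - W)"
proof -
  have p: "phi E V0 W (W - V) S \<le> phi E V0 W (W - V) T" by (rule phi_rtrancl[OF assms])
  have TV: "T \<subseteq> V" using li_rtrancl[OF r SV] by blast
  have a1: "pc E (W \<inter> T) (W \<inter> T) \<le> pc E (W \<inter> T) V0" using WV0 by (intro pc_mono[OF finE]) auto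
  have a2: "pc E (W \<inter> T) (W - V) \<le> pc E (W - V) V0"
  proof -
    have "pc E (W \<inter> T) (W - V) = pc E (W - V) (W \<inter> T)" by (rule pc_sym[OF symE])
    also have "\<dots> \<le> pc E (W - V) V0" using WV0 by (intro pc_mono[OF finE]) auto
    finally show ?thesis .
  qed
  have a3: "pc E (W \<inter> T) (V0 - W) \<le> pc E W (V0 - W)" by (intro pc_mono[OF finE]) auto
  show ?thesis using p a1 a2 a3 unfolding phi_def by linarith
qed


theorem mainTheorem10:
  fixes V0 :: "'a set" and E :: "('a \<times> 'a) set" and eps :: real
    and W V S S1 S2 S3 S4 Sbar5 :: "'a set"
  assumes graph: "simple_graph V0 E"
    and eps_pos: "0 < eps" and eps_le: "eps \<le> 1 / 2000000"
    and cluster: "spectral_cluster V0 E eps W"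
    and V_sub: "V \<subseteq> V0"
    and V_closed: "closed_in_graph E V0 V"
    and V_dom: "dominates V0 E eps V W"
    and S_sub: "S \<subseteq> V"
    and S_closed: "closed_in_graph E V S"
    and Sbar_closed: "closed_in_graph E V (V - S)"
    and Sbar_dom: "dominates V0 E eps (V - S) W"
    and step1: "S1 = grab E V S"
    and step2: "local_improvements E V S1 S2"
    and step3: "S3 = grab E V S2"
    and step4: "local_improvements E V S3 S4"
    and step5: "local_improvements E V (V - S4) Sbar5"
  shows "dominates V0 E eps Sbar5 W"
proof -
  have finV0: "finite V0" and EV: "E \<subseteq> V0 \<times> V0" and symE: "sym E" and irrE: "irrefl E"
    using graph unfolding simple_graph_def by auto
  have finE: "finite E" using finV0 EV by (meson finite_SigmaI finite_subset)
  have WV0: "W \<subseteq> V0" and Mpos0: "vol E V0 W > 0"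
    and bdr: "real (card (edges_between E W (V0 - W))) \<le> eps * real (vol E V0 W)"
    and clu: "\<And>A. A \<subseteq> W \<Longrightarrow> (let r = real (vol E V0 A) / real (vol E V0 W) in
        real (card (edges_between E A (W - A))) \<ge> (r * (1 - r) - eps) * real (vol E V0 W))"
    using cluster unfolding spectral_cluster_def by auto
  have volpc: "vol E V0 A = pc E A V0" if "A \<subseteq> V0" for A
    using vol_pc[OF finE] finite_subset[OF that finV0] by blast
  define M where "M = real (pc E W V0)"
  have Mdef: "real (vol E V0 W) = M" using volpc[OF WV0] M_def by simp
  have Mpos: "M > 0" using Mpos0 Mdef by simp
  define bd where "bd = pc E W (V0 - W)"
  have bdM: "real bd \<le> eps * M" using bdr eb_card[of W "V0 - W" E] Mdef bd_def by auto
  define U where "U = W - V"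
  have S1V: "S1 \<subseteq> V" using step1 S_sub by (auto simp: grab_def)
  have r2: "(li_step E V)\<^sup>*\<^sup>* S1 S2" using step2 by (simp add: local_improvements_def)
  have S2V: "S2 \<subseteq> V" using li_rtrancl[OF r2 S1V] by blast
  have S3V: "S3 \<subseteq> V" using step3 S2V by (auto simp: grab_def)
  have r4: "(li_step E V)\<^sup>*\<^sup>* S3 S4" using step4 by (simp add: local_improvements_def)
  have S4V: "S4 \<subseteq> V" using li_rtrancl[OF r4 S3V] by blast
  have r5: "(li_step E V)\<^sup>*\<^sup>* (V - S4) Sbar5" using step5 by (simp add: local_improvements_def)
  have S5V: "Sbar5 \<subseteq> V" and S5sup: "V - S4 \<subseteq> Sbar5" using li_rtrancl[OF r5] by auto
  have nost: "\<not> li_step E V Sbar5 S''" for S'' using step5 by (simp add: local_improvements_def)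
  have part0: "pc E W V0 = pc E (W \<inter> S) V0 + pc E (W \<inter> (V - S)) V0 + pc E U V0"
  proof -
    have "W = ((W \<inter> S) \<union> (W \<inter> (V - S))) \<union> U" using S_sub U_def by auto
    then have "pc E W V0 = pc E (((W \<inter> S) \<union> (W \<inter> (V - S))) \<union> U) V0" by (rule arg_cong[where f="\<lambda>A. pc E A V0"])
    also have "\<dots> = pc E ((W \<inter> S) \<union> (W \<inter> (V - S))) V0 + pc E U V0"
      by (rule pc_Un1[OF finE]) (use S_sub in \<open>auto simp: U_def\<close>)
    also have "pc E ((W \<inter> S) \<union> (W \<inter> (V - S))) V0 = pc E (W \<inter> S) V0 + pc E (W \<inter> (V - S)) V0"
      by (rule pc_Un1[OF finE]) auto
    finally show ?thesis .
  qed
  have dom0: "real (pc E (W \<inter> (V - S)) V0) > (1 - 3 * eps) * M"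
  proof -
    have "W \<inter> (V - S) \<subseteq> V0" using WV0 by auto
    then show ?thesis using Sbar_dom volpc[of "W \<inter> (V - S)"] Mdef unfolding dominates_def by simp
  qed
  define y0 where "y0 = pc E (W \<inter> S) V0"
  define u where "u = pc E U V0"
  have p0: "M = real y0 + real (pc E (W \<inter> (V - S)) V0) + real u"
    using part0 unfolding M_def y0_def u_def by simp
  have p1: "(1 - 3 * eps) * M = M - 3 * eps * M" by (simp add: algebra_simps)
  have init: "real y0 + real u < 3 * eps * M" using p0 p1 dom0 by linarith
  have b1: "pc E (W \<inter> S1) V0 \<le> 7 * y0 + u + 7 * bd"
    using grab_bound[OF finE symE finV0 WV0 V_sub S_sub] step1 unfolding y0_def u_def bd_def U_def by simp
  have b2: "pc E (W \<inter> S2) V0 \<le> 10 * pc E (W \<inter> S1) V0 + 18 * u + 36 * bd"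
    using li_bound[OF finE symE irrE WV0 V_sub r2 S1V] unfolding u_def bd_def U_def by simp
  have b3: "pc E (W \<inter> S3) V0 \<le> 7 * pc E (W \<inter> S2) V0 + u + 7 * bd"
    using grab_bound[OF finE symE finV0 WV0 V_sub S2V] step3 unfolding u_def bd_def U_def by simp
  have b4: "pc E (W \<inter> S4) V0 \<le> 10 * pc E (W \<inter> S3) V0 + 18 * u + 36 * bd"
    using li_bound[OF finE symE irrE WV0 V_sub r4 S3V] unfolding u_def bd_def U_def by simp
  define X where "X = W - Sbar5"
  have XW: "X \<subseteq> W" by (auto simp: X_def)
  have WX: "W - X = W \<inter> Sbar5" by (auto simp: X_def)
  have b5: "pc E X V0 \<le> u + pc E (W \<inter> S4) V0"
  proof -
    have "X \<subseteq> U \<union> (W \<inter> S4)" using S5sup unfolding X_def U_def by auto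
    then have "pc E X V0 \<le> pc E (U \<union> (W \<inter> S4)) V0" using pc_mono[OF finE] by blast
    also have "\<dots> \<le> pc E U V0 + pc E (W \<inter> S4) V0" by (rule pc_Un_le1[OF finE])
    finally show ?thesis unfolding u_def .
  qed
  have pv: "9 * pc E {v} (W - X) \<le> 5 * pc E {v} V0" if vX: "v \<in> X" for v
  proof (cases "v \<in> V")
    case False
    have vV0: "v \<in> V0 - V" using vX XW WV0 False by auto
    have "pc E {v} (W - X) \<le> pc E {v} V" using S5V WX by (intro pc_mono[OF finE]) auto
    moreover have cv: "card (nbrs E V0 v \<inter> V) = pc E {v} V"
      using nbrs_Int[of E V0 v V] V_sub by (simp add: Int_absorb1)
    moreover have "pc E {v} V \<le> pc E {v} V0" using V_sub by (intro pc_mono[OF finE]) auto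
    moreover have "9 * pc E {v} V \<le> 5 * pc E {v} V0"
    proof (cases "deg E V0 v > 0")
      case True
      then have "\<not> real (card (nbrs E V0 v \<inter> V)) \<ge> 5/9 * real (deg E V0 v)"
        using V_closed vV0 unfolding closed_in_graph_def by blast
      then show ?thesis using cv by (simp add: deg_pc)
    next
      case False
      then have "pc E {v} V0 = 0" by (simp add: deg_pc)
      then show ?thesis using \<open>pc E {v} V \<le> pc E {v} V0\<close> by simp
    qed
    ultimately show ?thesis by linarith
  next
    case True
    have vV: "v \<in> V - Sbar5" using True vX X_def by auto
    have "pc E {v} (W - X) \<le> pc E {v} Sbar5" using WX by (intro pc_mono[OF finE]) auto
    moreover have cv: "card (nbrs E V v \<inter> Sbar5) = pc E {v} Sbar5"
      using nbrs_Int[of E V v Sbar5] S5V by (simp add: Int_absorb1)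
    moreover have le1: "pc E {v} Sbar5 \<le> pc E {v} V" using S5V by (intro pc_mono[OF finE]) auto
    moreover have le2: "pc E {v} V \<le> pc E {v} V0" using V_sub by (intro pc_mono[OF finE]) auto
    moreover have "9 * pc E {v} Sbar5 \<le> 5 * pc E {v} V"
    proof (cases "deg E V v > 0")
      case True
      then have "\<not> real (card (nbrs E V v \<inter> Sbar5)) \<ge> 5/9 * real (deg E V v)"
        using nost[of "insert v Sbar5"] vV unfolding li_step_def by blast
      then show ?thesis using cv by (simp add: deg_pc)
    next
      case False
      then have "pc E {v} V = 0" by (simp add: deg_pc)
      then show ?thesis using le1 by simp
    qed
    ultimately show ?thesis by linarith
  qed
  have finX: "finite X" by (rule finite_subset[OF order_trans[OF XW WV0] finV0])
  have sX: "9 * pc E X (W - X) \<le> 5 * pc E X V0"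
  proof -
    have "9 * pc E X (W - X) = (\<Sum>v\<in>X. 9 * pc E {v} (W - X))"
      using pc_sum[OF finE finX, of "W - X"] by (simp add: sum_distrib_left)
    also have "\<dots> \<le> (\<Sum>v\<in>X. 5 * pc E {v} V0)" by (rule sum_mono) (rule pv)
    also have "\<dots> = 5 * pc E X V0" using pc_sum[OF finE finX, of V0] by (simp add: sum_distrib_left)
    finally show ?thesis .
  qed
  define x where "x = real (pc E X V0)"
  have cX: "real (pc E X (W - X)) \<ge> x - x * x / M - eps * M"
  proof -
    have "X \<subseteq> V0" using XW WV0 by auto
    have c: "real (card (edges_between E X (W - X))) \<ge>
       (real (vol E V0 X) / M * (1 - real (vol E V0 X) / M) - eps) * M"
      using clu[OF XW] Mdef by (simp add: Let_def)
    have "card (edges_between E X (W - X)) = pc E X (W - X)" by (rule eb_card) auto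
    moreover have "real (vol E V0 X) = x" using volpc[OF \<open>X \<subseteq> V0\<close>] x_def by simp
    moreover have "(x / M * (1 - x / M) - eps) * M = x - x * x / M - eps * M"
      using Mpos by (simp add: field_simps power2_eq_square)
    ultimately show ?thesis using c by simp
  qed
  define e where "e = eps * M"
  have epos: "e > 0" using eps_pos Mpos e_def by simp
  have init': "real y0 + real u < 3 * e" using init e_def by simp
  have bdM': "real bd \<le> e" using bdM e_def by simp
  have cX': "real (pc E X (W - X)) \<ge> x - x * x / M - e" using cX e_def by simp
  have xbound: "x \<le> 22300 * e"
    using init' b1 b2 b3 b4 b5 bdM' unfolding x_def by linarith
  have epsM: "2000000 * e \<le> M" using eps_le Mpos e_def by (simp add: field_simps)
  have xs80: "80 * x \<le> M" using xbound epsM epos by linarith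
  have xsmall: "x \<le> M / 80" using xs80 by simp
  have x0: "x \<ge> 0" unfolding x_def by simp
  have "x * x \<le> (M / 80) * x" using xsmall x0 by (rule mult_right_mono)
  then have xx: "x * x / M \<le> x / 80" using Mpos by (simp add: field_simps)
  have "9 * real (pc E X (W - X)) \<le> 5 * x" using sX unfolding x_def by linarith
  then have xlt: "x < 3 * e" using cX' xx epos by linarith
  have split: "pc E W V0 = pc E (W \<inter> Sbar5) V0 + pc E X V0"
  proof -
    have "W = (W \<inter> Sbar5) \<union> X" by (auto simp: X_def)
    then have "pc E W V0 = pc E ((W \<inter> Sbar5) \<union> X) V0" by (rule arg_cong[where f="\<lambda>A. pc E A V0"])
    also have "\<dots> = pc E (W \<inter> Sbar5) V0 + pc E X V0" by (rule pc_Un1[OF finE]) (auto simp: X_def)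
    finally show ?thesis .
  qed
  have "W \<inter> Sbar5 \<subseteq> V0" using WV0 by auto
  then have v5: "real (vol E V0 (W \<inter> Sbar5)) = M - x"
    using volpc split unfolding M_def x_def by simp
  have "M - x > (1 - 3 * eps) * M" using xlt e_def by (simp add: algebra_simps)
  then show ?thesis unfolding dominates_def using v5 Mdef by simp
qed

end
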